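(* Let $X_1,\dots,X_N$ ($N\ge2$) be independent random variables with finite means. Let $S=\bigcup_{i=1}^N S_i$ be a set of samples where $S_i$ consists of i.i.d. samples of $X_i$, and let $S$ be randomly divided into two subsets $S^A$ and $S^B$, with $S_i^A=S_i\cap S^A$, $S_i^B=S_i\cap S^B$ nonempty. Define the sample averages $\hat\mu_i=\frac{1}{|S_i|}\sum_{s\in S_i}s$, $\hat\mu_i^A=\frac{1}{|S_i^A|}\sum_{s\in S_i^A}s$, $\hat\mu_i^B=\frac{1}{|S_i^B|}\sum_{s\in S_i^B}s$, and the single estimator $\hat\mu^*_{SE}=\max_i\hat\mu_i$. For $1\le K\le N$, let $\mathcal{M}_K$ be the set of indices of the $K$ largest values in $(\hat\mu^B_1,\dots,\hat\mu^B_N)$, and let $a_K^*$ be an index with $\hat\mu^A_{a_K^*}=\max_{i\in\mathcal{M}_K}\hat\mu^A_i$ (ties broken at random). Let $a^*$ be an index with $\hat\mu^A_{a^*}=\max_i\hat\mu^A_i$, and define the clipped double estimator $\hat\mu^*_{CDE}=\min\{\hat\mu^B_{a^*},\hat\mu^*_{SE}\}$. Assume that the values in $(\hat\mu^A_i)_i$ and in $(\hat\mu^B_i)_i$ are different. Then for $1\le K<N$, $$\mathbb{E}\left[\min\{\hat\mu^B_{a_K^*},\hat\mu^*_{SE}\}\right]\ \ge\ \mathbb{E}\left[\min\{\hat\mu^B_{a_{K+1}^*},\hat\mu^*_{SE}\}\right],$$ where the inequality is strict if and only if $P(\hat\mu^*_{SE}>\hat\mu^B_{a_K^*}>\hat\mu^B_{a_{K+1}^*})>0$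 or $P(\hat\mu^B_{a_K^*}\ge\hat\mu^*_{SE}>\hat\mu^B_{a_{K+1}^*})>0$. Moreover, for all $1\le K\le N$, $\mathbb{E}\left[\min\{\hat\mu^B_{a_K^*},\hat\mu^*_{SE}\}\right]\ge\mathbb{E}\left[\hat\mu^*_{CDE}\right]$.
   Context: The quantity $\min\{\hat\mu^B_{a_K^*},\hat\mu^*_{SE}\}$ is called the action candidate based clipped double estimator of $\max_i\mathbb{E}[X_i]$; $\mathcal{M}_K$ is the set of "action candidates". *)

theory Defs
  imports "HOL-Probability.Probability"
begin

definition avg :: "nat set \<Rightarrow> (nat \<Rightarrow> real) \<Rightarrow> real" where
  "avg A f = (\<Sum>j\<in>A. f j) / real (card A)"

text \<open>When the values are
  pairwise distinct this is exactly the set of the K largest values.\<close>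
definition topK :: "nat \<Rightarrow> nat \<Rightarrow> (nat \<Rightarrow> real) \<Rightarrow> nat set" where
  "topK N K f = {i. i < N \<and> card {j. j < N \<and> f i < f j} < K}"

end

theory Submission
  imports Defs
begin


lemma topK_sub: "topK N K f \<subseteq> {..<N}"
  unfolding topK_def by auto

lemma topK_mono: "K \<le> L \<Longrightarrow> topK N K f \<subseteq> topK N L f"
  unfolding topK_def by auto

lemma topK_N: "topK N N f = {..<N}"
proof -
  have "card {j. j < N \<and> f i < f j} < N" if "i < N" for i
  proof -
    have "{j. j < N \<and> f i < f j} \<subseteq> {..<N} - {i}" by auto
    hence "card {j. j < N \<and> f i < f j} \<le> card ({..<N} - {i})" by (intro card_mono) auto
    also have "\<dots> = N - 1" using that by simp
    finally show ?thesis using that by linarith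
  qed
  thus ?thesis unfolding topK_def by auto
qed

lemma topK_step:
  assumes inj: "inj_on f {..<N}" and i: "i \<in> topK N (Suc K) f" "i \<notin> topK N K f"
    and j: "j \<in> topK N K f"
  shows "f i < f j"
proof (rule ccontr)
  assume "\<not> f i < f j"
  have jN: "j < N" and iN: "i < N" using i j unfolding topK_def by auto
  have "i \<noteq> j" using i j by auto
  hence "f i \<noteq> f j" using inj iN jN by (auto dest: inj_onD)
  with \<open>\<not> f i < f j\<close> have lt: "f j < f i" by auto
  have ci: "card {l. l < N \<and> f i < f l} \<ge> K" using i iN unfolding topK_def by auto
  have sub: "insert i {l. l < N \<and> f i < f l} \<subseteq> {l. l < N \<and> f j < f l}" using lt iN by auto
  have finj: "finite {l. l < N \<and> f j < f l}" by (rule finite_subset[of _ "{..<N}"]) auto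
  have fini: "finite {l. l < N \<and> f i < f l}" by (rule finite_subset[of _ "{..<N}"]) auto
  have c1: "card (insert i {l. l < N \<and> f i < f l}) \<le> card {l. l < N \<and> f j < f l}"
    using card_mono[OF finj sub] .
  have c2: "card (insert i {l. l < N \<and> f i < f l}) = Suc (card {l. l < N \<and> f i < f l})"
    using fini by simp
  have "Suc (card {l. l < N \<and> f i < f l}) \<le> card {l. l < N \<and> f j < f l}" using c1 c2 by simp
  moreover have "card {l. l < N \<and> f j < f l} < K" using j unfolding topK_def by auto
  ultimately show False using ci by linarith
qed

lemma argmax_eq:
  fixes g :: "nat \<Rightarrow> real"
  assumes inj: "inj_on g {..<N}" and S: "S \<subseteq> {..<N}" and x: "x \<in> S" "g x = Max (g ` S)"
    and y: "y \<in> S" "\<forall>z\<in>S. g z \<le> g y"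
  shows "y = x"
proof -
  have fin: "finite S" using S by (rule finite_subset) simp
  have "g y \<le> g x" using x y fin by (simp add: Max_ge)
  moreover have "g x \<le> g y" using x y by auto
  ultimately have "g x = g y" by simp
  thus ?thesis using inj S x y by (auto dest: inj_onD)
qed

lemma step_le:
  fixes fA fB :: "nat \<Rightarrow> real"
  assumes injA: "inj_on fA {..<N}" and injB: "inj_on fB {..<N}"
    and x: "x \<in> topK N K fB" "fA x = Max (fA ` topK N K fB)"
    and y: "y \<in> topK N (Suc K) fB" "fA y = Max (fA ` topK N (Suc K) fB)"
  shows "fB y \<le> fB x"
proof (cases "y \<in> topK N K fB")
  case True
  have sub: "topK N K fB \<subseteq> topK N (Suc K) fB" by (rule topK_mono) simp
  have fin: "finite (topK N (Suc K) fB)" by (rule finite_subset[OF topK_sub]) simp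
  have "\<forall>z\<in>topK N K fB. fA z \<le> fA y"
  proof
    fix z assume "z \<in> topK N K fB"
    hence "z \<in> topK N (Suc K) fB" using sub by blast
    hence "fA z \<le> Max (fA ` topK N (Suc K) fB)" by (rule Max_ge[OF finite_imageI[OF fin] imageI])
    thus "fA z \<le> fA y" using y(2) by simp
  qed
  hence "y = x" by (rule argmax_eq[OF injA topK_sub x True])
  thus ?thesis by simp
next
  case False
  thus ?thesis using topK_step[OF injB y(1) False x(1)] by simp
qed



lemma avg_bound:
  fixes f :: "nat \<Rightarrow> real"
  assumes "finite T" "S \<subseteq> T" "S \<noteq> {}"
  shows "\<bar>avg S f\<bar> \<le> (\<Sum>j\<in>T. \<bar>f j\<bar>)"
proof -
  have fS: "finite S" using assms(2,1) by (rule finite_subset)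
  have c: "real (card S) \<ge> 1" using fS assms(3) by (simp add: Suc_leI card_gt_0_iff)
  have "\<bar>avg S f\<bar> = \<bar>sum f S\<bar> / real (card S)" unfolding avg_def by simp
  also have "\<dots> \<le> \<bar>sum f S\<bar>"
  proof -
    have "\<bar>sum f S\<bar> * 1 \<le> \<bar>sum f S\<bar> * real (card S)" using c by (intro mult_left_mono) auto
    thus ?thesis using c by (simp add: divide_le_eq)
  qed
  also have "\<dots> \<le> (\<Sum>j\<in>S. \<bar>f j\<bar>)" by (rule sum_abs)
  also have "\<dots> \<le> (\<Sum>j\<in>T. \<bar>f j\<bar>)" using assms by (intro sum_mono2) auto
  finally show ?thesis .
qed

lemma card_filter_real:
  fixes m :: nat
  shows "real (card {j. j < m \<and> P j}) = (\<Sum>j<m. if P j then 1 else 0)"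
proof -
  have e: "{j. j < m \<and> P j} = {j\<in>{..<m}. P j}" by auto
  have "real (card {j\<in>{..<m}. P j}) = (\<Sum>j\<in>{j\<in>{..<m}. P j}. 1::real)" by simp
  also have "\<dots> = (\<Sum>j<m. if P j then 1 else 0)" by (rule sum.inter_filter) simp
  finally show ?thesis unfolding e .
qed

lemma avg_filter:
  fixes f :: "nat \<Rightarrow> real"
  shows "avg {j. j < m \<and> P j} f = (\<Sum>j<m. if P j then f j else 0) / (\<Sum>j<m. if P j then 1 else 0)"
proof -
  have e: "{j. j < m \<and> P j} = {j\<in>{..<m}. P j}" by auto
  have n: "(\<Sum>j\<in>{j\<in>{..<m}. P j}. f j) = (\<Sum>j<m. if P j then f j else 0)" by (rule sum.inter_filter) simp
  show ?thesis unfolding avg_def card_filter_real[symmetric] unfolding e n ..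
qed

lemma min_diff:
  fixes b c s :: real
  assumes "c \<le> b" "min b s \<noteq> min c s"
  shows "(s > b \<and> b > c) \<or> (b \<ge> s \<and> s > c)"
  using assms unfolding min_def by (auto split: if_splits)

theorem theorem1:
  fixes M :: "'a measure" and N :: nat and n :: "nat \<Rightarrow> nat"
    and X :: "nat \<Rightarrow> 'a \<Rightarrow> real"
    and Y :: "nat \<Rightarrow> nat \<Rightarrow> 'a \<Rightarrow> real"
    and inA :: "nat \<Rightarrow> nat \<Rightarrow> 'a \<Rightarrow> bool"
    and a :: "nat \<Rightarrow> 'a \<Rightarrow> nat" and astar :: "'a \<Rightarrow> nat"
    and muA muB mu :: "nat \<Rightarrow> 'a \<Rightarrow> real" and SE :: "'a \<Rightarrow> real"
  defines "muA \<equiv> \<lambda>i \<omega>. avg {j. j < n i \<and> inA i j \<omega>} (\<lambda>j. Y i j \<omega>)"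
    and "muB \<equiv> \<lambda>i \<omega>. avg {j. j < n i \<and> \<not> inA i j \<omega>} (\<lambda>j. Y i j \<omega>)"
    and "mu \<equiv> \<lambda>i \<omega>. avg {..<n i} (\<lambda>j. Y i j \<omega>)"
    and "SE \<equiv> \<lambda>\<omega>. Max ((\<lambda>i. mu i \<omega>) ` {..<N})"
  assumes P: "prob_space M"
    and N2: "N \<ge> 2"
    and indepX: "prob_space.indep_vars M (\<lambda>_::nat. borel) X {..<N}"
    and intX: "\<forall>i<N. integrable M (X i)"
    and indepY: "prob_space.indep_vars M (\<lambda>_::nat \<times> nat. borel) (\<lambda>(i, j). Y i j) (SIGMA i:{..<N}. {..<n i})"
    and distY: "\<forall>i<N. \<forall>j<n i. distr M borel (Y i j) = distr M borel (X i)"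
    and split_meas: "\<forall>i<N. \<forall>j<n i. inA i j \<in> measurable M (count_space UNIV)"
    and nonempty: "\<forall>\<omega>\<in>space M. \<forall>i<N. (\<exists>j<n i. inA i j \<omega>) \<and> (\<exists>j<n i. \<not> inA i j \<omega>)"
    and distinct: "\<forall>\<omega>\<in>space M. inj_on (\<lambda>i. muA i \<omega>) {..<N} \<and> inj_on (\<lambda>i. muB i \<omega>) {..<N}"
    and a_spec: "\<forall>\<omega>\<in>space M. \<forall>K. 1 \<le> K \<and> K \<le> N \<longrightarrow>
        a K \<omega> \<in> topK N K (\<lambda>i. muB i \<omega>) \<and>
        muA (a K \<omega>) \<omega> = Max ((\<lambda>i. muA i \<omega>) ` topK N K (\<lambda>i. muB i \<omega>))"
    and astar_spec: "\<forall>\<omega>\<in>space M. astar \<omega> < N \<and>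
        muA (astar \<omega>) \<omega> = Max ((\<lambda>i. muA i \<omega>) ` {..<N})"
  shows "(\<forall>K. 1 \<le> K \<and> K < N \<longrightarrow>
      (integral\<^sup>L M (\<lambda>\<omega>. min (muB (a K \<omega>) \<omega>) (SE \<omega>))
         \<ge> integral\<^sup>L M (\<lambda>\<omega>. min (muB (a (K + 1) \<omega>) \<omega>) (SE \<omega>))) \<and>
      ((integral\<^sup>L M (\<lambda>\<omega>. min (muB (a K \<omega>) \<omega>) (SE \<omega>))
         > integral\<^sup>L M (\<lambda>\<omega>. min (muB (a (K + 1) \<omega>) \<omega>) (SE \<omega>)))
       \<longleftrightarrow>
       (measure M {\<omega>\<in>space M. SE \<omega> > muB (a K \<omega>) \<omega> \<and>
                              muB (a K \<omega>) \<omega> > muB (a (K + 1) \<omega>) \<omega>} > 0 \<or>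
        measure M {\<omega>\<in>space M. muB (a K \<omega>) \<omega> \<ge> SE \<omega> \<and>
                              SE \<omega> > muB (a (K + 1) \<omega>) \<omega>} > 0)))
    \<and> (\<forall>K. 1 \<le> K \<and> K \<le> N \<longrightarrow>
      integral\<^sup>L M (\<lambda>\<omega>. min (muB (a K \<omega>) \<omega>) (SE \<omega>))
        \<ge> integral\<^sup>L M (\<lambda>\<omega>. min (muB (astar \<omega>) \<omega>) (SE \<omega>)))"
proof -
  interpret prob_space M by (rule P)
  have Ymeas: "Y i j \<in> borel_measurable M" if "i < N" "j < n i" for i j
    using indepY that unfolding indep_vars_def by auto
  have inAsets: "{\<omega>\<in>space M. inA i j \<omega>} \<in> sets M" if "i < N" "j < n i" for i j
  proof -
    have "inA i j \<in> measurable M (count_space UNIV)" using split_meas that by blast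
    from this[unfolded Measurable.pred_def] show ?thesis by simp
  qed
  have muB_eq: "muB i = (\<lambda>\<omega>. (\<Sum>j<n i. if \<not> inA i j \<omega> then Y i j \<omega> else 0) /
      (\<Sum>j<n i. if \<not> inA i j \<omega> then 1 else 0))" for i
    unfolding muB_def by (rule ext) (simp add: avg_filter)
  have muA_eq: "muA i = (\<lambda>\<omega>. (\<Sum>j<n i. if inA i j \<omega> then Y i j \<omega> else 0) /
      (\<Sum>j<n i. if inA i j \<omega> then 1 else 0))" for i
    unfolding muA_def by (rule ext) (simp add: avg_filter)
  have muB_meas: "muB i \<in> borel_measurable M" if "i < N" for i
    unfolding muB_eq using that
    by (intro borel_measurable_divide borel_measurable_sum measurable_If)
       (auto intro: Ymeas sets.sets_Collect_neg inAsets)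
  have muA_meas: "muA i \<in> borel_measurable M" if "i < N" for i
    unfolding muA_eq using that
    by (intro borel_measurable_divide borel_measurable_sum measurable_If)
       (auto intro: Ymeas inAsets)
  have mu_meas: "mu i \<in> borel_measurable M" if "i < N" for i
    unfolding mu_def avg_def using that
    by (intro borel_measurable_divide borel_measurable_sum) (auto intro: Ymeas)
  have SE_meas[measurable]: "SE \<in> borel_measurable M"
    unfolding SE_def by (rule borel_measurable_Max) (auto intro: mu_meas)
  define mB where "mB i = (if i < N then muB i else (\<lambda>_. 0))" for i
  define mA where "mA i = (if i < N then muA i else (\<lambda>_. 0))" for i
  have mB_meas[measurable]: "mB i \<in> borel_measurable M" for i
    unfolding mB_def using muB_meas by auto
  have mA_meas[measurable]: "mA i \<in> borel_measurable M" for i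
    unfolding mA_def using muA_meas by auto
  have mB_eq: "mB i \<omega> = muB i \<omega>" if "i < N" for i \<omega> using that by (simp add: mB_def)
  have mA_eq: "mA i \<omega> = muA i \<omega>" if "i < N" for i \<omega> using that by (simp add: mA_def)

  have injA: "inj_on (\<lambda>i. muA i \<omega>) {..<N}" and injB: "inj_on (\<lambda>i. muB i \<omega>) {..<N}"
    if "\<omega> \<in> space M" for \<omega> using distinct that by auto

  have le_step: "muB (a (Suc K) \<omega>) \<omega> \<le> muB (a K \<omega>) \<omega>"
    if "\<omega> \<in> space M" "1 \<le> K" "K < N" for \<omega> K
  proof -
    have 1: "a K \<omega> \<in> topK N K (\<lambda>i. muB i \<omega>) \<and>
        muA (a K \<omega>) \<omega> = Max ((\<lambda>i. muA i \<omega>) ` topK N K (\<lambda>i. muB i \<omega>))"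
      using a_spec that by auto
    have 2: "a (Suc K) \<omega> \<in> topK N (Suc K) (\<lambda>i. muB i \<omega>) \<and>
        muA (a (Suc K) \<omega>) \<omega> = Max ((\<lambda>i. muA i \<omega>) ` topK N (Suc K) (\<lambda>i. muB i \<omega>))"
      using a_spec that by auto
    show ?thesis
      using step_le[OF injA[OF that(1)] injB[OF that(1)], of "a K \<omega>" K "a (Suc K) \<omega>"] 1 2 by blast
  qed
  have chain: "\<forall>L. K \<le> L \<and> L \<le> N \<longrightarrow> muB (a L \<omega>) \<omega> \<le> muB (a K \<omega>) \<omega>"
    if "\<omega> \<in> space M" "1 \<le> K" for \<omega> K
  proof
    fix L show "K \<le> L \<and> L \<le> N \<longrightarrow> muB (a L \<omega>) \<omega> \<le> muB (a K \<omega>) \<omega>"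
    proof (induction L)
      case 0 then show ?case using that by auto
    next
      case (Suc L)
      show ?case
      proof (cases "K = Suc L")
        case True then show ?thesis by simp
      next
        case False
        show ?thesis
        proof
          assume h: "K \<le> Suc L \<and> Suc L \<le> N"
          hence "K \<le> L" "L < N" using False by auto
          hence "muB (a L \<omega>) \<omega> \<le> muB (a K \<omega>) \<omega>" using Suc by auto
          moreover have "muB (a (Suc L) \<omega>) \<omega> \<le> muB (a L \<omega>) \<omega>"
            using le_step[OF that(1), of L] \<open>K \<le> L\<close> \<open>L < N\<close> that(2) by auto
          ultimately show "muB (a (Suc L) \<omega>) \<omega> \<le> muB (a K \<omega>) \<omega>" by linarith
        qed
      qed
    qed
  qed
  have astar_eq: "astar \<omega> = a N \<omega>" if "\<omega> \<in> space M" for \<omega>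
  proof -
    have 1: "a N \<omega> \<in> topK N N (\<lambda>i. muB i \<omega>) \<and>
        muA (a N \<omega>) \<omega> = Max ((\<lambda>i. muA i \<omega>) ` topK N N (\<lambda>i. muB i \<omega>))"
      using a_spec that N2 by auto
    have 2: "astar \<omega> < N" "muA (astar \<omega>) \<omega> = Max ((\<lambda>i. muA i \<omega>) ` {..<N})"
      using astar_spec that by auto
    have "\<forall>z\<in>{..<N}. muA z \<omega> \<le> muA (astar \<omega>) \<omega>" using 2 by (auto intro: Max_ge)
    thus ?thesis
      using argmax_eq[OF injA[OF that], of "{..<N}" "a N \<omega>" "astar \<omega>"] 1 2 unfolding topK_N by auto
  qed

  define inT where "inT K i \<omega> \<longleftrightarrow> i < N \<and> (\<Sum>j<N. if mB i \<omega> < mB j \<omega> then 1 else 0::real) < real K"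
    for K i \<omega>
  define isA where "isA K i \<omega> \<longleftrightarrow> inT K i \<omega> \<and> (\<forall>j. j < N \<longrightarrow> inT K j \<omega> \<longrightarrow> mA j \<omega> \<le> mA i \<omega>)"
    for K i \<omega>
  have cnt_meas: "(\<lambda>\<omega>. (\<Sum>j<N. if mB i \<omega> < mB j \<omega> then 1 else 0::real)) \<in> borel_measurable M" for i
    by (intro borel_measurable_sum measurable_If borel_measurable_const borel_measurable_less mB_meas)
  have inT_pred[measurable]: "Measurable.pred M (inT K i)" for K i
  proof (cases "i < N")
    case True
    have "{\<omega>\<in>space M. (\<Sum>j<N. if mB i \<omega> < mB j \<omega> then 1 else 0::real) < real K} \<in> sets M"
      by (intro borel_measurable_less cnt_meas borel_measurable_const)
    hence "Measurable.pred M (\<lambda>\<omega>. (\<Sum>j<N. if mB i \<omega> < mB j \<omega> then 1 else 0::real) < real K)"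
      by (rule Measurable.pred_def[THEN iffD2])
    thus ?thesis unfolding inT_def using True by simp
  next
    case False
    thus ?thesis unfolding Measurable.pred_def inT_def by simp
  qed
  have isA_pred[measurable]: "Measurable.pred M (isA K i)" for K i
    unfolding isA_def by measurable
  have inT_iff: "inT K i \<omega> \<longleftrightarrow> i \<in> topK N K (\<lambda>i. muB i \<omega>)" for K i \<omega>
  proof (cases "i < N")
    case True
    have "(\<Sum>j<N. if mB i \<omega> < mB j \<omega> then 1 else 0::real) = (\<Sum>j<N. if muB i \<omega> < muB j \<omega> then 1 else 0)"
      using True by (intro sum.cong) (auto simp: mB_eq)
    also have "\<dots> = real (card {j. j < N \<and> muB i \<omega> < muB j \<omega>})" by (rule card_filter_real[symmetric])
    finally show ?thesis unfolding inT_def topK_def using True by auto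
  next
    case False then show ?thesis unfolding inT_def topK_def by auto
  qed
  have isA_iff: "isA K i \<omega> \<longleftrightarrow> a K \<omega> = i" if "\<omega> \<in> space M" "1 \<le> K" "K \<le> N" for K i \<omega>
  proof -
    let ?T = "topK N K (\<lambda>i. muB i \<omega>)"
    have 1: "a K \<omega> \<in> ?T" "muA (a K \<omega>) \<omega> = Max ((\<lambda>i. muA i \<omega>) ` ?T)"
      using a_spec that by auto
    have fin: "finite ?T" by (rule finite_subset[OF topK_sub]) simp
    have isA': "isA K i \<omega> \<longleftrightarrow> i \<in> ?T \<and> (\<forall>j\<in>?T. muA j \<omega> \<le> muA i \<omega>)"
    proof (cases "i < N")
      case True
      then show ?thesis
        unfolding isA_def inT_iff using topK_sub[of N K "\<lambda>i. muB i \<omega>"] by (auto simp: mA_eq)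
    next
      case False
      hence "i \<notin> ?T" using topK_sub by auto
      then show ?thesis unfolding isA_def inT_iff by simp
    qed
    show ?thesis
    proof
      assume "isA K i \<omega>"
      hence "i \<in> ?T" "\<forall>j\<in>?T. muA j \<omega> \<le> muA i \<omega>" using isA' by auto
      thus "a K \<omega> = i" using argmax_eq[OF injA[OF that(1)] topK_sub 1] by auto
    next
      assume "a K \<omega> = i"
      thus "isA K i \<omega>" using isA' 1 fin by (auto intro: Max_ge)
    qed
  qed
  have g_eq: "muB (a K \<omega>) \<omega> = (\<Sum>i<N. if isA K i \<omega> then mB i \<omega> else 0)"
    if "\<omega> \<in> space M" "1 \<le> K" "K \<le> N" for K \<omega>
  proof -
    have "a K \<omega> \<in> topK N K (\<lambda>i. muB i \<omega>)" using a_spec that by simp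
    hence aN: "a K \<omega> < N" using topK_sub by auto
    have "(\<Sum>i<N. if isA K i \<omega> then mB i \<omega> else 0) = (\<Sum>i<N. if a K \<omega> = i then mB i \<omega> else 0)"
      using isA_iff[OF that] by (intro sum.cong) auto
    also have "\<dots> = muB (a K \<omega>) \<omega>" using aN by (simp add: sum.delta' mB_eq)
    finally show ?thesis by simp
  qed
  have g_meas: "(\<lambda>\<omega>. muB (a K \<omega>) \<omega>) \<in> borel_measurable M" if "1 \<le> K" "K \<le> N" for K
  proof -
    have "(\<lambda>\<omega>. (\<Sum>i<N. if isA K i \<omega> then mB i \<omega> else 0)) \<in> borel_measurable M" by measurable
    thus ?thesis using measurable_cong[of M "\<lambda>\<omega>. muB (a K \<omega>) \<omega>"] g_eq that by auto
  qed
  define G where "G K \<omega> = min (muB (a K \<omega>) \<omega>) (SE \<omega>)" for K \<omega>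
  define B where "B \<omega> = (\<Sum>i<N. \<Sum>j<n i. \<bar>Y i j \<omega>\<bar>)" for \<omega>
  have Yint: "integrable M (Y i j)" if "i < N" "j < n i" for i j
  proof -
    have Xm: "X i \<in> borel_measurable M" using intX that by auto
    have "integrable (distr M borel (X i)) (\<lambda>x. x)"
      using integrable_distr_eq[OF Xm, of "\<lambda>x. x"] intX that by auto
    hence "integrable (distr M borel (Y i j)) (\<lambda>x. x)" using distY that by auto
    thus ?thesis using integrable_distr_eq[OF Ymeas[OF that], of "\<lambda>x. x"] by auto
  qed
  have Bint: "integrable M B" unfolding B_def
  proof -
    have "integrable M (\<lambda>\<omega>. \<Sum>j<n i. \<bar>Y i j \<omega>\<bar>)" if "i < N" for i
      using Yint that by (auto intro!: integrable_sum integrable_abs)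
    thus "integrable M (\<lambda>\<omega>. \<Sum>i<N. \<Sum>j<n i. \<bar>Y i j \<omega>\<bar>)" by (auto intro!: integrable_sum)
  qed
  have Yle: "(\<Sum>j<n i. \<bar>Y i j \<omega>\<bar>) \<le> B \<omega>" if "i < N" for i \<omega>
    unfolding B_def using that by (intro member_le_sum) (auto intro: sum_nonneg)
  have muB_bd: "\<bar>muB i \<omega>\<bar> \<le> B \<omega>" if "\<omega> \<in> space M" "i < N" for i \<omega>
  proof -
    have "\<bar>muB i \<omega>\<bar> \<le> (\<Sum>j<n i. \<bar>Y i j \<omega>\<bar>)"
      unfolding muB_def using nonempty that by (intro avg_bound) auto
    thus ?thesis using Yle[of i \<omega>] that(2) by linarith
  qed
  have mu_bd: "\<bar>mu i \<omega>\<bar> \<le> B \<omega>" if "\<omega> \<in> space M" "i < N" for i \<omega>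
  proof -
    have "\<bar>mu i \<omega>\<bar> \<le> (\<Sum>j<n i. \<bar>Y i j \<omega>\<bar>)"
      unfolding mu_def using nonempty that by (intro avg_bound) auto
    thus ?thesis using Yle[of i \<omega>] that(2) by linarith
  qed
  have SE_bd: "\<bar>SE \<omega>\<bar> \<le> B \<omega>" if "\<omega> \<in> space M" for \<omega>
  proof -
    have "SE \<omega> \<in> (\<lambda>i. mu i \<omega>) ` {..<N}" unfolding SE_def using N2 by (intro Max_in) (auto simp: lessThan_empty_iff)
    then obtain i where "i < N" "SE \<omega> = mu i \<omega>" by auto
    thus ?thesis using mu_bd[OF that] by auto
  qed
  have G_meas: "G K \<in> borel_measurable M" if "1 \<le> K" "K \<le> N" for K
    unfolding G_def using g_meas[OF that] SE_meas by (intro borel_measurable_min) auto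
  have G_int: "integrable M (G K)" if "1 \<le> K" "K \<le> N" for K
  proof (rule Bochner_Integration.integrable_bound[OF Bint G_meas[OF that]])
    show "AE x in M. norm (G K x) \<le> norm (B x)"
    proof (rule AE_I2)
      fix x assume x: "x \<in> space M"
      have "a K x \<in> topK N K (\<lambda>i. muB i x)" using a_spec that x by simp
      hence aN: "a K x < N" using topK_sub by auto
      have "\<bar>G K x\<bar> \<le> B x" unfolding G_def using muB_bd[OF x aN] SE_bd[OF x]
        by (auto simp: min_def)
      thus "norm (G K x) \<le> norm (B x)" by auto
    qed
  qed
  have part1: "integral\<^sup>L M (G K) \<ge> integral\<^sup>L M (G (K + 1)) \<and>
      (integral\<^sup>L M (G K) > integral\<^sup>L M (G (K + 1)) \<longleftrightarrow>
       (measure M {\<omega>\<in>space M. SE \<omega> > muB (a K \<omega>) \<omega> \<and>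
                              muB (a K \<omega>) \<omega> > muB (a (K + 1) \<omega>) \<omega>} > 0 \<or>
        measure M {\<omega>\<in>space M. muB (a K \<omega>) \<omega> \<ge> SE \<omega> \<and>
                              SE \<omega> > muB (a (K + 1) \<omega>) \<omega>} > 0))"
    if K: "1 \<le> K" "K < N" for K
  proof -
    have [measurable]: "(\<lambda>\<omega>. muB (a K \<omega>) \<omega>) \<in> borel_measurable M" using g_meas K by auto
    have [measurable]: "(\<lambda>\<omega>. muB (a (K+1) \<omega>) \<omega>) \<in> borel_measurable M" using g_meas K by auto
    have I1: "integrable M (G K)" and I2: "integrable M (G (K+1))" using G_int K by auto
    have st: "muB (a (K+1) \<omega>) \<omega> \<le> muB (a K \<omega>) \<omega>" if "\<omega> \<in> space M" for \<omega>
      using le_step[OF that K] by simp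
    have Dnn: "G (K+1) \<omega> \<le> G K \<omega>" if "\<omega> \<in> space M" for \<omega>
      unfolding G_def using st[OF that] by (auto simp: min_def)
    have ineq: "integral\<^sup>L M (G (K+1)) \<le> integral\<^sup>L M (G K)"
      by (rule integral_mono[OF I2 I1 Dnn])
    define D where "D \<omega> = G K \<omega> - G (K+1) \<omega>" for \<omega>
    have Dint: "integrable M D" unfolding D_def using I1 I2 by auto
    have Dmeas[measurable]: "D \<in> borel_measurable M" using Dint by auto
    have intD: "integral\<^sup>L M D = integral\<^sup>L M (G K) - integral\<^sup>L M (G (K+1))"
      unfolding D_def using I1 I2 by (rule Bochner_Integration.integral_diff)
    define S1 where "S1 = {\<omega>\<in>space M. SE \<omega> > muB (a K \<omega>) \<omega> \<and>
                              muB (a K \<omega>) \<omega> > muB (a (K + 1) \<omega>) \<omega>}"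
    define S2 where "S2 = {\<omega>\<in>space M. muB (a K \<omega>) \<omega> \<ge> SE \<omega> \<and>
                              SE \<omega> > muB (a (K + 1) \<omega>) \<omega>}"
    have S1s[measurable]: "S1 \<in> sets M" unfolding S1_def by measurable
    have S2s[measurable]: "S2 \<in> sets M" unfolding S2_def by measurable
    have Deq: "{\<omega>\<in>space M. \<not> D \<omega> = 0} = S1 \<union> S2"
    proof (intro set_eqI iffI)
      fix x assume h: "x \<in> {\<omega>\<in>space M. \<not> D \<omega> = 0}"
      hence xs: "x \<in> space M" and nz: "min (muB (a K x) x) (SE x) \<noteq> min (muB (a (K+1) x) x) (SE x)"
        unfolding D_def G_def by auto
      have "muB (a (K+1) x) x \<le> muB (a K x) x" using st[OF xs] .
      hence "(SE x > muB (a K x) x \<and> muB (a K x) x > muB (a (K + 1) x) x) \<or>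
             (muB (a K x) x \<ge> SE x \<and> SE x > muB (a (K + 1) x) x)"
        using nz by (rule min_diff)
      thus "x \<in> S1 \<union> S2" unfolding S1_def S2_def using xs by blast
    next
      fix x assume "x \<in> S1 \<union> S2"
      thus "x \<in> {\<omega>\<in>space M. \<not> D \<omega> = 0}" unfolding S1_def S2_def D_def G_def by (auto simp: min_def)
    qed
    have "integral\<^sup>L M D = 0 \<longleftrightarrow> (AE x in M. D x = 0)"
    proof -
      have nnD: "AE x in M. 0 \<le> D x"
      proof (rule AE_I2)
        fix x assume "x \<in> space M"
        from Dnn[OF this] show "0 \<le> D x" unfolding D_def by simp
      qed
      show ?thesis by (rule integral_nonneg_eq_0_iff_AE[OF Dint nnD])
    qed
    also have "\<dots> \<longleftrightarrow> emeasure M (S1 \<union> S2) = 0"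
      using Deq by (intro AE_iff_measurable) auto
    also have "\<dots> \<longleftrightarrow> measure M (S1 \<union> S2) = 0" by (simp add: emeasure_eq_measure)
    also have "measure M (S1 \<union> S2) = measure M S1 + measure M S2"
      by (rule finite_measure_Union[OF S1s S2s]) (auto simp: S1_def S2_def)
    finally have e: "integral\<^sup>L M D = 0 \<longleftrightarrow> measure M S1 + measure M S2 = 0" .
    have "integral\<^sup>L M D \<ge> 0" using intD ineq by simp
    moreover have "measure M S1 \<ge> 0" "measure M S2 \<ge> 0" by auto
    ultimately have "integral\<^sup>L M D > 0 \<longleftrightarrow> measure M S1 > 0 \<or> measure M S2 > 0"
      using e by linarith
    thus ?thesis using intD ineq unfolding S1_def S2_def by auto
  qed
  have part2: "integral\<^sup>L M (G K) \<ge> integral\<^sup>L M (\<lambda>\<omega>. min (muB (astar \<omega>) \<omega>) (SE \<omega>))"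
    if K: "1 \<le> K" "K \<le> N" for K
  proof -
    have eq: "min (muB (astar \<omega>) \<omega>) (SE \<omega>) = G N \<omega>" if "\<omega> \<in> space M" for \<omega>
      unfolding G_def using astar_eq[OF that] by simp
    have Ia: "integrable M (\<lambda>\<omega>. min (muB (astar \<omega>) \<omega>) (SE \<omega>))"
      using G_int[of N] N2 eq by (subst Bochner_Integration.integrable_cong[OF refl eq]) auto
    show ?thesis
    proof (rule integral_mono[OF Ia G_int[OF K]])
      fix \<omega> assume w: "\<omega> \<in> space M"
      have "muB (a N \<omega>) \<omega> \<le> muB (a K \<omega>) \<omega>" using chain[OF w K(1)] K by auto
      thus "min (muB (astar \<omega>) \<omega>) (SE \<omega>) \<le> G K \<omega>" unfolding G_def astar_eq[OF w]
        by (auto simp: min_def)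
    qed
  qed
  show ?thesis using part1 part2 unfolding G_def by auto
qed

end
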